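(* Let $m\ge 1$ and $n\ge 2$ be integers. For every $\mathbf a\in mB^n$, $$f_m(n,2,\mathbf a)=mn+m.$$
   Context: $mB^n=\{0,1,\ldots,m\}^n\subseteq\mathbb{R}^n$. A family of affine hyperplanes in $\mathbb{R}^n$ is a finite multiset, and a point is covered $j$ times if exactly $j$ members of the multiset contain it. For $\mathbf a\in mB^n$ and a positive integer $k$, $f_m(n,k,\mathbf a)$ denotes the minimum size of a family of affine hyperplanes such that every point of $mB^n\setminus\{\mathbf a\}$ is covered at least $k$ times and $\mathbf a$ lies on no member of the family. *)

theory Defs
  imports "HOL-Analysis.Analysis" "HOL-Library.Multiset"
begin

text \<open>The grid mB^n = {0,...,m}^n inside R^n, with R^n = real^'n and n = CARD('n).\<close>
definition grid :: "nat \<Rightarrow> (real^'n) set" where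
  "grid m = {x. \<forall>i. x $ i \<in> real ` {0..m}}"

definition affine_hyperplane :: "(real^'n) set \<Rightarrow> bool" where
  "affine_hyperplane H \<longleftrightarrow> (\<exists>c b. c \<noteq> 0 \<and> H = {x. c \<bullet> x = b})"

definition cover_mult :: "(real^'n) set multiset \<Rightarrow> real^'n \<Rightarrow> nat" where
  "cover_mult F x = size (filter_mset (\<lambda>H. x \<in> H) F)"

definition k_cover_avoiding :: "nat \<Rightarrow> nat \<Rightarrow> real^'n \<Rightarrow> (real^'n) set multiset \<Rightarrow> bool" where
  "k_cover_avoiding m k a F \<longleftrightarrow>
     (\<forall>H\<in>#F. affine_hyperplane H) \<and>
     (\<forall>x\<in>grid m - {a}. cover_mult F x \<ge> k) \<and>
     (\<forall>H\<in>#F. a \<notin> H)"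

text \<open>f_m(n,k,a), with n = CARD('n) determined by the type of a.\<close>
definition f_cov :: "nat \<Rightarrow> nat \<Rightarrow> real^'n \<Rightarrow> nat" where
  "f_cov m k a = (LEAST N. \<exists>F. k_cover_avoiding m k a F \<and> size F = N)"

end

theory Submission
  imports Defs "HOL-Computational_Algebra.Polynomial"
begin


definition wt :: "nat \<Rightarrow> nat \<Rightarrow> real" where
  "wt k s = (-1)^(k-s) / (fact s * fact (k-s))"

lemma wt_nz: "wt k s \<noteq> 0"
  by (simp add: wt_def)

lemma wt_step:
  assumes "s < k"
  shows "wt k s * (real s - real k) = wt (k-1) s"
proof -
  obtain d where d: "k - s = Suc d" using assms by (metis Suc_diff_Suc)
  have d2: "k - 1 - s = d" using d by simp
  have rk: "real k = real s + 1 + real d" using d assms by linarith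
  have f: "fact (Suc d) = (real d + 1) * fact d" by simp
  show ?thesis unfolding wt_def d d2 rk f
    by (simp add: divide_simps) (simp add: algebra_simps)
qed

lemma wt_sum: assumes "k > 0" shows "(\<Sum>s\<le>k. wt k s) = 0"
proof -
  have "(\<Sum>s\<le>k. wt k s) = (\<Sum>s\<le>k. ((-1)^k / fact k) * ((-1)^s * of_nat (k choose s)))"
  proof (rule sum.cong)
    fix s assume "s \<in> {..k}"
    then have sk: "s \<le> k" by simp
    have e: "((-1::real)^(k-s)) = (-1)^k * (-1)^s"
    proof -
      have kk: "k + s = (k - s) + 2 * s" using sk by simp
      have "((-1::real)^(k+s)) = (-1)^(k-s) * ((-1)^2)^s" unfolding kk by (simp only: power_add power_mult)
      then have "((-1::real)^(k+s)) = (-1)^(k-s)" by simp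
      then show ?thesis by (simp add: power_add)
    qed
    show "wt k s = ((-1)^k / fact k) * ((-1)^s * of_nat (k choose s))"
      unfolding wt_def e binomial_fact[OF sk] by (simp add: field_simps)
  qed simp
  also have "\<dots> = ((-1)^k / fact k) * (\<Sum>s\<le>k. (-1)^s * of_nat (k choose s))"
    by (simp add: sum_distrib_left)
  also have "\<dots> = 0" using choose_alternating_sum[OF assms] by simp
  finally show ?thesis .
qed



definition indepJ :: "'n set \<Rightarrow> (real^'n \<Rightarrow> real) \<Rightarrow> bool" where
  "indepJ J F \<longleftrightarrow> (\<forall>x y. (\<forall>i. i \<notin> J \<longrightarrow> x$i = y$i) \<longrightarrow> F x = F y)"

inductive pol :: "'n::finite set \<Rightarrow> nat \<Rightarrow> (real^'n \<Rightarrow> real) \<Rightarrow> bool" for J where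
  indep: "indepJ J F \<Longrightarrow> pol J d F"
| mulv: "pol J d F \<Longrightarrow> j \<in> J \<Longrightarrow> pol J (Suc d) (\<lambda>x. x$j * F x)"
| add: "pol J d F \<Longrightarrow> pol J d G \<Longrightarrow> pol J d (\<lambda>x. F x + G x)"
| cmul: "pol J d F \<Longrightarrow> indepJ J G \<Longrightarrow> pol J d (\<lambda>x. G x * F x)"
| mono: "pol J d F \<Longrightarrow> d \<le> e \<Longrightarrow> pol J e F"

definition upd :: "real^'n \<Rightarrow> 'n set \<Rightarrow> ('n \<Rightarrow> nat) \<Rightarrow> real^'n" where
  "upd x J y = (\<chi> i. if i \<in> J then real (y i) else x$i)"

definition Wt :: "'n set \<Rightarrow> ('n \<Rightarrow> nat) \<Rightarrow> ('n \<Rightarrow> nat) \<Rightarrow> real" where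
  "Wt J k y = (\<Prod>i\<in>J. wt (k i) (y i))"

definition Phi :: "'n::finite set \<Rightarrow> ('n \<Rightarrow> nat) \<Rightarrow> (real^'n \<Rightarrow> real) \<Rightarrow> real^'n \<Rightarrow> real" where
  "Phi J k F x = (\<Sum>y\<in>PiE J (\<lambda>i. {0..k i}). Wt J k y * F (upd x J y))"

lemma upd_nth: "upd x J y $ i = (if i \<in> J then real (y i) else x$i)"
  by (simp add: upd_def)

lemma Phi_leibniz:
  fixes J :: "'n::finite set"
  assumes j: "j \<in> J" and kj: "k j > 0"
  shows "Phi J k (\<lambda>x. x$j * F x) x = real (k j) * Phi J k F x + Phi J (k(j := k j - 1)) F x"
proof -
  define k' where "k' = k(j := k j - 1)"
  define K where "K = PiE J (\<lambda>i. {0..k i})"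
  define K' where "K' = PiE J (\<lambda>i. {0..k' i})"
  have fK: "finite K" unfolding K_def by (simp add: finite_PiE)
  have sub: "K' \<subseteq> K" unfolding K_def K'_def k'_def
    by (rule PiE_mono) auto
  have "Phi J k (\<lambda>x. x$j * F x) x - real (k j) * Phi J k F x
      = (\<Sum>y\<in>K. Wt J k y * (real (y j) - real (k j)) * F (upd x J y))"
    unfolding Phi_def K_def sum_distrib_left sum_subtractf[symmetric] upd_nth using j
    by (intro sum.cong) (auto simp: algebra_simps)
  also have "\<dots> = (\<Sum>y\<in>K'. Wt J k y * (real (y j) - real (k j)) * F (upd x J y))"
  proof (rule sum.mono_neutral_right[OF fK sub])
    show "\<forall>y\<in>K - K'. Wt J k y * (real (y j) - real (k j)) * F (upd x J y) = 0"
    proof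
      fix y assume y: "y \<in> K - K'"
      have "y j = k j"
      proof (rule ccontr)
        assume ne: "y j \<noteq> k j"
        have "y \<in> K'" unfolding K'_def
        proof (rule PiE_I)
          fix i assume i: "i \<in> J"
          show "y i \<in> {0..k' i}"
            using y i ne unfolding K_def k'_def by (auto simp: PiE_iff)
        next
          fix i assume "i \<notin> J" then show "y i = undefined" using y unfolding K_def by (auto simp: PiE_iff extensional_def)
        qed
        then show False using y by simp
      qed
      then show "Wt J k y * (real (y j) - real (k j)) * F (upd x J y) = 0" by simp
    qed
  qed
  also have "\<dots> = (\<Sum>y\<in>K'. Wt J k' y * F (upd x J y))"
  proof (rule sum.cong[OF refl])
    fix y assume y: "y \<in> K'"
    have yj: "y j < k j" using y j kj unfolding K'_def k'_def by (auto simp: PiE_iff)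
    have fJ: "finite J" by simp
    have h1: "Wt J k y = wt (k j) (y j) * (\<Prod>i\<in>J-{j}. wt (k i) (y i))"
      unfolding Wt_def using prod.remove[OF fJ j] by simp
    have h2: "Wt J k' y = wt (k j - 1) (y j) * (\<Prod>i\<in>J-{j}. wt (k i) (y i))"
    proof -
      have "Wt J k' y = wt (k' j) (y j) * (\<Prod>i\<in>J-{j}. wt (k' i) (y i))"
        unfolding Wt_def using prod.remove[OF fJ j] by simp
      moreover have "(\<Prod>i\<in>J-{j}. wt (k' i) (y i)) = (\<Prod>i\<in>J-{j}. wt (k i) (y i))"
        by (rule prod.cong) (auto simp: k'_def)
      ultimately show ?thesis by (simp add: k'_def)
    qed
    have h3: "wt (k j) (y j) * (real (y j) - real (k j)) = wt (k j - 1) (y j)" by (rule wt_step[OF yj])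
    have "Wt J k y * (real (y j) - real (k j)) * F (upd x J y)
        = (wt (k j) (y j) * (real (y j) - real (k j))) * (\<Prod>i\<in>J-{j}. wt (k i) (y i)) * F (upd x J y)"
      by (simp add: h1 ac_simps)
    also have "\<dots> = wt (k j - 1) (y j) * (\<Prod>i\<in>J-{j}. wt (k i) (y i)) * F (upd x J y)"
      by (simp only: h3)
    also have "\<dots> = Wt J k' y * F (upd x J y)" by (simp add: h2)
    finally show "Wt J k y * (real (y j) - real (k j)) * F (upd x J y) = Wt J k' y * F (upd x J y)" .
  qed
  finally show ?thesis unfolding Phi_def K_def K'_def k'_def by simp
qed

lemma pol_vanish:
  fixes J :: "'n::finite set"
  assumes "pol J d F"
  shows "d < sum k J \<Longrightarrow> Phi J k F x = 0"
  using assms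
proof (induction arbitrary: k x rule: pol.induct)
  case (indep F d)
  have fu: "F (upd x J y) = F x" for y
    using indep.hyps unfolding indepJ_def by (auto simp: upd_nth)
  have "Phi J k F x = F x * (\<Sum>y\<in>PiE J (\<lambda>i. {0..k i}). Wt J k y)"
    unfolding Phi_def fu by (simp add: sum_distrib_left mult.commute)
  also have "(\<Sum>y\<in>PiE J (\<lambda>i. {0..k i}). Wt J k y) = (\<Prod>i\<in>J. \<Sum>s\<in>{0..k i}. wt (k i) s)"
    unfolding Wt_def by (rule prod_sum_PiE[symmetric]) auto
  also have "\<dots> = 0"
  proof -
    obtain i where i: "i \<in> J" "k i > 0" using indep.prems
      by (metis gr0I sum.neutral less_nat_zero_code)
    have "(\<Sum>s\<in>{0..k i}. wt (k i) s) = 0" using wt_sum[OF i(2)] by (simp add: atLeast0AtMost)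
    then show ?thesis using i(1) by (simp add: prod_zero_iff) blast
  qed
  finally show ?case by simp
next
  case (mulv d F j)
  show ?case
  proof (cases "k j = 0")
    case True
    have "Phi J k (\<lambda>x. x$j * F x) x = 0" unfolding Phi_def
    proof (rule sum.neutral, rule ballI)
      fix y assume y: "y \<in> PiE J (\<lambda>i. {0..k i})"
      then have "y j \<le> k j" using mulv.hyps(2) by (auto simp: PiE_iff)
      then have "y j = 0" using True by simp
      then show "Wt J k y * (upd x J y $ j * F (upd x J y)) = 0" by (simp add: upd_nth mulv.hyps(2))
    qed
    then show ?thesis .
  next
    case False
    have s': "sum (k(j := k j - 1)) J = sum k J - 1"
    proof -
      have e: "sum (k(j := k j - 1)) (J - {j}) = sum k (J - {j})"
        by (rule sum.cong) auto
      have "sum (k(j := k j - 1)) J = (k j - 1) + sum k (J - {j})"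
        using sum.remove[of J j "k(j := k j - 1)"] mulv.hyps(2) e by simp
      moreover have "sum k J = k j + sum k (J - {j})"
        using sum.remove[of J j k] mulv.hyps(2) by simp
      ultimately show ?thesis using False by simp
    qed
    have L: "Phi J k (\<lambda>x. x$j * F x) x = real (k j) * Phi J k F x + Phi J (k(j := k j - 1)) F x"
      by (rule Phi_leibniz) (use mulv.hyps(2) False in auto)
    have "Phi J k F x = 0" using mulv.IH[of k x] mulv.prems by simp
    moreover have "Phi J (k(j := k j - 1)) F x = 0"
    proof (rule mulv.IH)
      show "d < sum (k(j := k j - 1)) J" using s' mulv.prems by simp
    qed
    ultimately show ?thesis using L by simp
  qed
next
  case (add d F G)
  then show ?case by (simp add: Phi_def algebra_simps sum.distrib)
next
  case (cmul d F G)
  have gu: "G (upd x J y) = G x" for y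
    using cmul.hyps(2) unfolding indepJ_def by (auto simp: upd_nth)
  have "Phi J k (\<lambda>x. G x * F x) x = G x * Phi J k F x"
    unfolding Phi_def gu by (simp add: sum_distrib_left algebra_simps)
  then show ?case using cmul by simp
next
  case (mono d F e)
  then show ?case by simp
qed



lemma pol_sum:
  fixes J :: "'n::finite set"
  assumes "finite A" "\<forall>a\<in>A. pol J d (f a)"
  shows "pol J d (\<lambda>x. \<Sum>a\<in>A. f a x)"
  using assms
proof (induction A rule: finite_induct)
  case empty
  show ?case by simp (rule pol.indep, simp add: indepJ_def)
next
  case (insert a A)
  then have "pol J d (\<lambda>x. f a x + (\<Sum>a\<in>A. f a x))" by (intro pol.add) auto
  then show ?case using insert by simp
qed

lemma pol_const: "pol J d (\<lambda>x. c)"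
  by (rule pol.indep) (simp add: indepJ_def)

lemma pol_cmul: "pol J d F \<Longrightarrow> pol J d (\<lambda>x. c * F x)"
  using pol.cmul[of J d F "\<lambda>x. c"] by (simp add: indepJ_def)

lemma pol_lin:
  fixes J :: "'n::finite set"
  assumes "pol J e G"
  shows "pol J (Suc e) (\<lambda>x. ((\<Sum>i\<in>J. c$i * x$i) - b) * G x)"
proof -
  have "pol J (Suc e) (\<lambda>x. (\<Sum>i\<in>J. c$i * (x$i * G x)) + (-b) * G x)"
  proof (rule pol.add)
    show "pol J (Suc e) (\<lambda>x. \<Sum>i\<in>J. c$i * (x$i * G x))"
      by (rule pol_sum) (auto intro!: pol_cmul pol.mulv assms)
    show "pol J (Suc e) (\<lambda>x. (-b) * G x)"
      by (rule pol.mono[OF pol_cmul[OF assms]]) simp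
  qed
  moreover have "(\<lambda>x. (\<Sum>i\<in>J. c$i * (x$i * G x)) + (-b) * G x) = (\<lambda>x. ((\<Sum>i\<in>J. c$i * x$i) - b) * G x)"
    by (auto simp: algebra_simps sum_distrib_right sum_distrib_left)
  ultimately show ?thesis by simp
qed

definition setc :: "'n \<Rightarrow> real^'n \<Rightarrow> real \<Rightarrow> real^'n" where
  "setc i0 x t = (\<chi> i. if i = i0 then t else x$i)"

definition linp :: "'n::finite \<Rightarrow> real^'n \<Rightarrow> real \<Rightarrow> real^'n \<Rightarrow> real poly" where
  "linp i0 c b x = [: (\<Sum>i\<in>UNIV-{i0}. c$i * x$i) - b, c$i0 :]"

lemma poly_linp: "poly (linp i0 c b x) t = c \<bullet> setc i0 x t - b"
proof -
  have "c \<bullet> setc i0 x t = (\<Sum>i\<in>UNIV. c$i * setc i0 x t $ i)"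
    by (simp add: inner_vec_def)
  also have "\<dots> = c$i0 * t + (\<Sum>i\<in>UNIV-{i0}. c$i * x$i)"
    by (subst sum.remove[of UNIV i0]) (auto simp: setc_def intro!: sum.cong)
  finally show ?thesis by (simp add: linp_def algebra_simps)
qed

lemma coeff_lin_mult: "coeff ([:u, c:] * q) j = u * coeff q j + (if j = 0 then 0 else c * coeff q (j - 1))"
proof -
  have "[:u, c:] * q = smult u q + pCons 0 (smult c q)"
    by (simp add: mult_pCons_left)
  then show ?thesis by (cases j) (auto simp: coeff_pCons)
qed

definition PP :: "'n::finite \<Rightarrow> ((real^'n) set \<Rightarrow> (real^'n) \<times> real) \<Rightarrow> (real^'n) set multiset \<Rightarrow> real^'n \<Rightarrow> real poly" where
  "PP i0 cb F x = (\<Prod>H\<in>#F. linp i0 (fst (cb H)) (snd (cb H)) x)"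

lemma PP_pol:
  fixes i0 :: "'n::finite"
  shows "(\<forall>x. degree (PP i0 cb F x) \<le> size F) \<and>
         (\<forall>j\<le>size F. pol (UNIV-{i0}) (size F - j) (\<lambda>x. coeff (PP i0 cb F x) j))"
proof (induction F)
  case empty
  show ?case by (auto simp: PP_def intro: pol_const)
next
  case (add H F)
  define N where "N = size F"
  define c where "c = fst (cb H)"
  define b where "b = snd (cb H)"
  define lf where "lf x = (\<Sum>i\<in>UNIV-{i0}. c$i * x$i) - b" for x
  have PPa: "PP i0 cb (add_mset H F) x = [: lf x, c$i0 :] * PP i0 cb F x" for x
    by (simp add: PP_def linp_def lf_def c_def b_def)
  have deg: "degree (PP i0 cb F x) \<le> N" for x using add.IH N_def by auto
  have pj: "pol (UNIV-{i0}) (N - j) (\<lambda>x. coeff (PP i0 cb F x) j)" if "j \<le> N" for j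
    using add.IH that N_def by auto
  have co: "coeff (PP i0 cb (add_mset H F) x) j = lf x * coeff (PP i0 cb F x) j +
      (if j = 0 then 0 else c$i0 * coeff (PP i0 cb F x) (j - 1))" for x j
    unfolding PPa coeff_lin_mult ..
  have D: "degree (PP i0 cb (add_mset H F) x) \<le> Suc N" for x
  proof -
    have "degree ([: lf x, c$i0 :] * PP i0 cb F x) \<le> degree [: lf x, c$i0 :] + degree (PP i0 cb F x)"
      by (rule degree_mult_le)
    also have "\<dots> \<le> 1 + N" using deg[of x] by (simp add: degree_pCons_le)
    finally show ?thesis unfolding PPa by simp
  qed
  have C: "pol (UNIV-{i0}) (Suc N - j) (\<lambda>x. coeff (PP i0 cb (add_mset H F) x) j)" if "j \<le> Suc N" for j
  proof (cases j)
    case 0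
    have "pol (UNIV-{i0}) (Suc (N - 0)) (\<lambda>x. ((\<Sum>i\<in>UNIV-{i0}. c$i * x$i) - b) * coeff (PP i0 cb F x) 0)"
      by (rule pol_lin[OF pj]) simp
    then show ?thesis unfolding co using 0 by (simp add: lf_def)
  next
    case (Suc j')
    show ?thesis
    proof (cases "j' < N")
      case True
      have "pol (UNIV-{i0}) (N - j') (\<lambda>x. lf x * coeff (PP i0 cb F x) j + c$i0 * coeff (PP i0 cb F x) j')"
      proof (rule pol.add)
        have "pol (UNIV-{i0}) (Suc (N - j)) (\<lambda>x. ((\<Sum>i\<in>UNIV-{i0}. c$i * x$i) - b) * coeff (PP i0 cb F x) j)"
          by (rule pol_lin[OF pj]) (use True Suc in simp)
        moreover have "Suc (N - j) = N - j'" using True Suc by simp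
        ultimately show "pol (UNIV-{i0}) (N - j') (\<lambda>x. lf x * coeff (PP i0 cb F x) j)"
          by (simp add: lf_def)
        show "pol (UNIV-{i0}) (N - j') (\<lambda>x. c$i0 * coeff (PP i0 cb F x) j')"
          by (rule pol_cmul[OF pj]) (use True in simp)
      qed
      then show ?thesis unfolding co using Suc by simp
    next
      case False
      then have jN: "j' = N" using that Suc by simp
      have z: "coeff (PP i0 cb F x) j = 0" for x
        using deg[of x] jN Suc by (simp add: coeff_eq_0)
      have "pol (UNIV-{i0}) 0 (\<lambda>x. c$i0 * coeff (PP i0 cb F x) N)"
        using pol_cmul[OF pj[of N]] by simp
      then show ?thesis unfolding co using Suc jN z by simp
    qed
  qed
  show ?case using D C N_def by simp
qed



lemma dvd_prod_mset_pow:
  fixes f :: "'a \<Rightarrow> 'b::comm_semiring_1"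
  shows "(\<forall>H\<in>#M. d dvd f H) \<Longrightarrow> d ^ size M dvd (\<Prod>H\<in>#M. f H)"
proof (induction M)
  case empty then show ?case by simp
next
  case (add x M)
  then have "d * d ^ size M dvd f x * (\<Prod>H\<in>#M. f H)" by (intro mult_dvd_mono) auto
  then show ?case by simp
qed

lemma prod_roots_dvd:
  fixes p :: "real poly" and r :: "'a \<Rightarrow> real"
  assumes "finite S" "inj_on r S" "\<forall>s\<in>S. [:-r s,1:]^(e s) dvd p"
  shows "(\<Prod>s\<in>S. [:-r s,1:]^(e s)) dvd p"
  using assms
proof (induction S arbitrary: p rule: finite_induct)
  case empty then show ?case by simp
next
  case (insert s S)
  show ?case
  proof (cases "p = 0")
    case True then show ?thesis by simp
  next
    case False
    obtain q where q: "p = [:-r s,1:]^(e s) * q" using insert.prems by (auto elim: dvdE)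
    have q0: "q \<noteq> 0" using False q by auto
    have "\<forall>s'\<in>S. [:-r s',1:]^(e s') dvd q"
    proof
      fix s' assume s': "s' \<in> S"
      have ne: "r s' \<noteq> r s" using insert.prems(1) insert.hyps(2) s' by (auto simp: inj_on_def)
      have "e s' \<le> order (r s') p" using insert.prems(2) s' False by (auto simp: order_divides)
      also have "order (r s') p = order (r s') ([:-r s,1:]^(e s)) + order (r s') q"
        unfolding q by (rule order_mult) (use False q in simp)
      also have "order (r s') ([:-r s,1:]^(e s)) = 0"
        by (rule order_0I) (use ne in \<open>simp add: poly_power\<close>)
      finally show "[:-r s',1:]^(e s') dvd q" by (simp add: order_divides)
    qed
    then have "(\<Prod>s\<in>S. [:-r s,1:]^(e s)) dvd q"
      using insert.IH[of q] insert.prems(1) by (auto simp: inj_on_insert)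
    then have "[:-r s,1:]^(e s) * (\<Prod>s\<in>S. [:-r s,1:]^(e s)) dvd p"
      unfolding q by (rule mult_dvd_mono[OF dvd_refl])
    then show ?thesis using insert.hyps by simp
  qed
qed

definition gpol :: "nat \<Rightarrow> nat \<Rightarrow> real poly" where
  "gpol m a0 = (\<Prod>s\<in>{0..m}. [:-real s,1:]^(if s = a0 then 1 else 2))"
definition hpol :: "nat \<Rightarrow> nat \<Rightarrow> real poly" where
  "hpol m a0 = (\<Prod>s\<in>{0..m}-{a0}. [:-real s,1:]^2)"
definition kap :: "nat \<Rightarrow> nat \<Rightarrow> real poly \<Rightarrow> real" where
  "kap m a0 q = coeff (q mod gpol m a0) (2*m)"

lemma g_eq: assumes "a0 \<le> m" shows "gpol m a0 = [:-real a0,1:] * hpol m a0"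
proof -
  have "gpol m a0 = [:-real a0,1:]^1 * (\<Prod>s\<in>{0..m}-{a0}. [:-real s,1:]^(if s = a0 then 1 else 2))"
    unfolding gpol_def using assms by (subst prod.remove[of _ a0]) auto
  also have "(\<Prod>s\<in>{0..m}-{a0}. [:-real s,1:]^(if s = a0 then 1 else 2)) = hpol m a0"
    unfolding hpol_def by (rule prod.cong) auto
  finally show ?thesis by simp
qed

lemma card_rest: assumes "a0 \<le> m" shows "card ({0..m}-{a0}) = m"
  using assms by (simp add: card_Diff_singleton)

lemma h_nz: "hpol m a0 \<noteq> 0"
  unfolding hpol_def by (auto simp: prod_zero_iff)

lemma deg_h: assumes "a0 \<le> m" shows "degree (hpol m a0) = 2*m"
proof -
  have "degree (hpol m a0) = (\<Sum>s\<in>{0..m}-{a0}. degree ([:-real s,1:]^2))"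
    unfolding hpol_def by (rule degree_prod_eq_sum_degree) auto
  also have "\<dots> = (\<Sum>s\<in>{0..m}-{a0}. 2)"
    by (rule sum.cong) (auto simp: degree_linear_power)
  finally show ?thesis using card_rest[OF assms] by simp
qed

lemma deg_g: assumes "a0 \<le> m" shows "degree (gpol m a0) = 2*m + 1"
proof -
  have "degree (gpol m a0) = degree [:-real a0,1:] + degree (hpol m a0)"
    unfolding g_eq[OF assms] by (rule degree_mult_eq) (simp_all add: h_nz)
  then show ?thesis by (simp add: deg_h[OF assms])
qed

lemma g_nz: assumes "a0 \<le> m" shows "gpol m a0 \<noteq> 0"
  using deg_g[OF assms] by auto

lemma mod_sum_poly: "(\<Sum>j\<in>A. f j) mod (g::real poly) = (\<Sum>j\<in>A. f j mod g)"
  by (induction A rule: infinite_finite_induct) (auto simp: poly_mod_add_left)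

lemma kap_sum:
  assumes "degree q \<le> N"
  shows "kap m a0 q = (\<Sum>j\<le>N. coeff q j * kap m a0 (monom 1 j))"
proof -
  have "q = (\<Sum>j\<le>N. monom (coeff q j) j)" using poly_as_sum_of_monoms'[OF assms] by simp
  also have "\<dots> = (\<Sum>j\<le>N. smult (coeff q j) (monom 1 j))" by (simp add: smult_monom)
  finally have "q mod gpol m a0 = (\<Sum>j\<le>N. smult (coeff q j) (monom 1 j mod gpol m a0))"
    by (metis (no_types, lifting) mod_smult_left mod_sum_poly sum.cong)
  then show ?thesis unfolding kap_def by (simp add: coeff_sum)
qed

lemma kap_low: assumes "a0 \<le> m" "j < 2*m" shows "kap m a0 (monom 1 j) = 0"
proof -
  have "monom 1 j mod gpol m a0 = monom 1 j"
    by (rule mod_poly_less) (use assms deg_g[OF assms(1)] in \<open>simp add: degree_monom_eq\<close>)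
  then show ?thesis unfolding kap_def using assms by (simp add: coeff_monom)
qed

lemma kap_zero: "gpol m a0 dvd q \<Longrightarrow> kap m a0 q = 0"
  unfolding kap_def by simp

lemma kap_nz:
  assumes "a0 \<le> m" "hpol m a0 dvd q" "poly q (real a0) \<noteq> 0"
  shows "kap m a0 q \<noteq> 0"
proof -
  obtain r where r: "q = hpol m a0 * r" using assms(2) by (auto elim: dvdE)
  define c where "c = poly r (real a0)"
  have hr: "poly (hpol m a0) (real a0) * c \<noteq> 0" using assms(3) r c_def by simp
  have rr: "r = [:-real a0, 1:] * synthetic_div r (real a0) + [:c:]"
    using synthetic_div_correct'[of "real a0" r] c_def by simp
  have "q = hpol m a0 * ([:-real a0, 1:] * synthetic_div r (real a0) + [:c:])"
    using r rr by simp
  also have "\<dots> = hpol m a0 * [:c:] + synthetic_div r (real a0) * ([:-real a0, 1:] * hpol m a0)"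
    by (simp only: distrib_left add.commute mult.commute mult.left_commute)
  finally have "q = hpol m a0 * [:c:] + synthetic_div r (real a0) * gpol m a0"
    unfolding g_eq[OF assms(1)] .
  then have "q mod gpol m a0 = (hpol m a0 * [:c:]) mod gpol m a0" by simp
  also have "\<dots> = hpol m a0 * [:c:]"
  proof (rule mod_poly_less)
    have "degree (hpol m a0 * [:c:]) \<le> degree (hpol m a0)"
      by (metis degree_mult_le degree_pCons_0 add_0_right)
    then show "degree (hpol m a0 * [:c:]) < degree (gpol m a0)"
      using deg_g[OF assms(1)] deg_h[OF assms(1)] by simp
  qed
  finally have "kap m a0 q = coeff (hpol m a0) (2*m) * c"
    unfolding kap_def by simp
  moreover have "coeff (hpol m a0) (2*m) \<noteq> 0"
    using deg_h[OF assms(1)] h_nz[of m a0] by (metis leading_coeff_0_iff)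
  moreover have "c \<noteq> 0" using hr by simp
  ultimately show ?thesis by simp
qed



lemma G_pol:
  fixes i0 :: "'n::finite"
  assumes "a0 \<le> m"
  shows "pol (UNIV-{i0}) (size F - 2*m) (\<lambda>x. kap m a0 (PP i0 cb F x))"
proof -
  have PPp: "(\<forall>x. degree (PP i0 cb F x) \<le> size F) \<and>
         (\<forall>j\<le>size F. pol (UNIV-{i0}) (size F - j) (\<lambda>x. coeff (PP i0 cb F x) j))"
    by (rule PP_pol)
  have eq: "(\<lambda>x. kap m a0 (PP i0 cb F x)) = (\<lambda>x. \<Sum>j\<le>size F. kap m a0 (monom 1 j) * coeff (PP i0 cb F x) j)"
    using PPp by (auto intro!: ext simp: kap_sum[of _ "size F"] mult.commute)
  have "pol (UNIV-{i0}) (size F - 2*m) (\<lambda>x. \<Sum>j\<le>size F. kap m a0 (monom 1 j) * coeff (PP i0 cb F x) j)"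
  proof (rule pol_sum, simp, rule ballI)
    fix j assume j: "j \<in> {..size F}"
    show "pol (UNIV-{i0}) (size F - 2*m) (\<lambda>x. kap m a0 (monom 1 j) * coeff (PP i0 cb F x) j)"
    proof (cases "j < 2*m")
      case True
      then show ?thesis using kap_low[OF assms True] by (simp add: pol_const)
    next
      case False
      have "pol (UNIV-{i0}) (size F - j) (\<lambda>x. kap m a0 (monom 1 j) * coeff (PP i0 cb F x) j)"
        by (rule pol_cmul) (use PPp j in auto)
      then show ?thesis by (rule pol.mono) (use False in simp)
    qed
  qed
  then show ?thesis unfolding eq .
qed

lemma lower_bound:
  fixes a :: "real^'n" and F :: "(real^'n) set multiset"
  assumes m1: "m \<ge> 1" and n2: "CARD('n) \<ge> 2" and ag: "a \<in> grid m"
    and cov: "k_cover_avoiding m 2 a F"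
  shows "m * CARD('n) + m \<le> size F"
proof (rule ccontr)
  assume "\<not> ?thesis"
  then have Nlt: "size F < m * CARD('n) + m" by simp
  from cov have hyp: "\<forall>H\<in>#F. affine_hyperplane H"
    and c2: "\<forall>x\<in>grid m - {a}. cover_mult F x \<ge> 2" and av: "\<forall>H\<in>#F. a \<notin> H"
    unfolding k_cover_avoiding_def by auto
  have "\<forall>H\<in>set_mset F. \<exists>p. H = {x. fst p \<bullet> x = snd p}"
  proof
    fix H assume "H \<in> set_mset F"
    then have "affine_hyperplane H" using hyp by simp
    then obtain c b where "H = {x. c \<bullet> x = b}" unfolding affine_hyperplane_def by blast
    then show "\<exists>p. H = {x. fst p \<bullet> x = snd p}" by (intro exI[of _ "(c,b)"]) simp
  qed
  from bchoice[OF this] obtain cb where cb: "\<forall>H\<in>set_mset F. H = {x. fst (cb H) \<bullet> x = snd (cb H)}"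
    by blast
  have memH: "x \<in> H \<longleftrightarrow> fst (cb H) \<bullet> x = snd (cb H)" if H: "H \<in># F" for H x
  proof -
    have eq: "H = {x. fst (cb H) \<bullet> x = snd (cb H)}" using cb H by blast
    have "x \<in> {x. fst (cb H) \<bullet> x = snd (cb H)} \<longleftrightarrow> fst (cb H) \<bullet> x = snd (cb H)" by simp
    then show ?thesis by (simp only: eq[symmetric])
  qed
  have "\<forall>i. \<exists>t. a$i = real t \<and> t \<le> m"
  proof
    fix i
    have "a$i \<in> real ` {0..m}" using ag unfolding grid_def by simp
    then obtain t where "t \<in> {0..m}" "a$i = real t" by blast
    then show "\<exists>t. a$i = real t \<and> t \<le> m" by auto
  qed
  then obtain \<alpha> where al: "\<forall>i. a$i = real (\<alpha> i) \<and> \<alpha> i \<le> m" by (rule choice[elim_format]) blast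
  obtain i0 :: 'n where True by simp
  define J where "J = UNIV - {i0}"
  define a0 where "a0 = \<alpha> i0"
  define G where "G x = kap m a0 (PP i0 cb F x)" for x
  have a0m: "a0 \<le> m" using al a0_def by simp
  have polG: "pol J (size F - 2*m) G" unfolding G_def J_def by (rule G_pol[OF a0m])
  have cardJ: "card J = CARD('n) - 1" unfolding J_def by (simp add: card_Diff_singleton)
  have lt: "size F - 2*m < sum (\<lambda>_. m) J"
  proof -
    have "sum (\<lambda>_. m) J = m * (CARD('n) - 1)" using cardJ by simp
    moreover have "m * CARD('n) = m * (CARD('n) - 1) + m"
    proof -
      have "CARD('n) = Suc (CARD('n) - 1)" using n2 by simp
      then have "m * CARD('n) = m * Suc (CARD('n) - 1)" by simp
      then show ?thesis using mult_Suc_right[of m "CARD('n) - 1"] by linarith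
    qed
    moreover have "m * (CARD('n) - 1) \<ge> m"
    proof -
      have c1: "1 \<le> CARD('n) - 1" using n2 by linarith
      have "m * 1 \<le> m * (CARD('n) - 1)" by (rule mult_le_mono2[OF c1])
      then show ?thesis by simp
    qed
    ultimately show ?thesis using Nlt m1 by linarith
  qed
  have van: "Phi J (\<lambda>_. m) G a = 0" by (rule pol_vanish[OF polG lt])

  have K1: "poly (PP i0 cb F z) t = (\<Prod>H\<in>#F. fst (cb H) \<bullet> setc i0 z t - snd (cb H))" for z t
    unfolding PP_def poly_prod_mset poly_linp ..
  have K2: "[:-real s,1:]^2 dvd PP i0 cb F z" if p: "setc i0 z (real s) \<in> grid m - {a}" for z s
  proof -
    define pt where "pt = setc i0 z (real s)"
    define M1 where "M1 = filter_mset (\<lambda>H. pt \<in> H) F"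
    define M2 where "M2 = filter_mset (\<lambda>H. pt \<notin> H) F"
    define lf where "lf H = linp i0 (fst (cb H)) (snd (cb H)) z" for H
    have sz: "size M1 \<ge> 2" using c2 p unfolding M1_def pt_def cover_mult_def by auto
    have FF: "F = M1 + M2" unfolding M1_def M2_def by (rule multiset_partition)
    have "PP i0 cb F z = (\<Prod>H\<in>#M1. lf H) * (\<Prod>H\<in>#M2. lf H)"
      unfolding PP_def lf_def by (subst FF) simp
    moreover have "[:-real s,1:]^(size M1) dvd (\<Prod>H\<in>#M1. lf H)"
    proof (rule dvd_prod_mset_pow, rule ballI)
      fix H assume H: "H \<in># M1"
      then have "H \<in># F" "pt \<in> H" unfolding M1_def by auto
      then have "fst (cb H) \<bullet> pt - snd (cb H) = 0" using memH by simp
      then have "poly (lf H) (real s) = 0" unfolding lf_def poly_linp pt_def .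
      then show "[:-real s,1:] dvd lf H" by (simp add: poly_eq_0_iff_dvd)
    qed
    moreover have "[:-real s,1:]^2 dvd [:-real s,1:]^(size M1)" by (rule le_imp_power_dvd[OF sz])
    ultimately show ?thesis by (metis dvd_trans dvd_mult2)
  qed
  have setc_grid: "setc i0 z (real s) \<in> grid m" if z: "z \<in> grid m" and sm: "s \<le> m" for z s
    unfolding grid_def mem_Collect_eq
  proof
    fix i show "setc i0 z (real s) $ i \<in> real ` {0..m}"
    proof (cases "i = i0")
      case True then show ?thesis using sm by (simp add: setc_def)
    next
      case False then show ?thesis using z by (simp add: setc_def grid_def)
    qed
  qed
  have upd_grid: "upd a J y \<in> grid m" if y: "y \<in> PiE J (\<lambda>_. {0..m})" for y
    unfolding grid_def mem_Collect_eq
  proof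
    fix i show "upd a J y $ i \<in> real ` {0..m}"
    proof (cases "i \<in> J")
      case True
      then have "y i \<in> {0..m}" using y by (simp add: PiE_iff)
      then show ?thesis using True by (simp add: upd_nth)
    next
      case False then show ?thesis using ag by (simp add: upd_nth grid_def)
    qed
  qed
  have K3: "G (upd a J y) = 0" if y: "y \<in> PiE J (\<lambda>_. {0..m})" and ne: "upd a J y \<noteq> a" for y
  proof -
    define z where "z = upd a J y"
    have zi0: "z$i0 = a$i0" unfolding z_def upd_def J_def by simp
    have "gpol m a0 dvd PP i0 cb F z" unfolding gpol_def
    proof (rule prod_roots_dvd[where r = real], simp, simp, rule ballI)
      fix s assume s: "s \<in> {0..m}"
      have "setc i0 z (real s) \<noteq> a"
      proof
        assume eq: "setc i0 z (real s) = a"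
        have "z = a"
        proof (rule vec_eq_iff[THEN iffD2], rule allI)
          fix i show "z$i = a$i"
          proof (cases "i = i0")
            case True then show ?thesis using zi0 by simp
          next
            case False then show ?thesis using arg_cong[OF eq, of "\<lambda>v. v$i"] by (simp add: setc_def)
          qed
        qed
        then show False using ne z_def by metis
      qed
      moreover have "setc i0 z (real s) \<in> grid m"
      proof (rule setc_grid)
        show "z \<in> grid m" using upd_grid[OF y] unfolding z_def .
        show "s \<le> m" using s by simp
      qed
      ultimately have "setc i0 z (real s) \<in> grid m - {a}" by simp
      then have d2: "[:-real s,1:]^2 dvd PP i0 cb F z" by (rule K2)
      have "[:-real s,1:]^(if s = a0 then 1 else 2) dvd [:-real s,1:]^2"
        by (rule le_imp_power_dvd) simp
      then show "[:-real s,1:]^(if s = a0 then 1 else 2) dvd PP i0 cb F z" using d2 by (rule dvd_trans)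
    qed
    then show ?thesis unfolding G_def z_def[symmetric] by (rule kap_zero)
  qed
  have setc_a: "setc i0 a (real a0) = a"
    using al unfolding setc_def a0_def by (simp add: vec_eq_iff)
  have K4: "G a \<noteq> 0" unfolding G_def
  proof (rule kap_nz[OF a0m])
    show "hpol m a0 dvd PP i0 cb F a" unfolding hpol_def
    proof (rule prod_roots_dvd[where r = real], simp, simp, rule ballI)
      fix s assume s: "s \<in> {0..m} - {a0}"
      have "setc i0 a (real s) \<noteq> a"
      proof
        assume eq: "setc i0 a (real s) = a"
        have "setc i0 a (real s) $ i0 = a $ i0" unfolding eq ..
        then have "real s = a$i0" by (simp add: setc_def)
        moreover have "a$i0 = real a0" using al unfolding a0_def by simp
        ultimately have "s = a0" by simp
        then show False using s by simp
      qed
      moreover have "s \<le> m" using s by simp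
      ultimately have "setc i0 a (real s) \<in> grid m - {a}" using setc_grid[OF ag] by blast
      then show "[:-real s,1:]^2 dvd PP i0 cb F a" by (rule K2)
    qed
    have "(\<Prod>H\<in>#F. fst (cb H) \<bullet> a - snd (cb H)) \<noteq> 0"
    proof -
      have "0 \<notin># image_mset (\<lambda>H. fst (cb H) \<bullet> a - snd (cb H)) F"
      proof
        assume "0 \<in># image_mset (\<lambda>H. fst (cb H) \<bullet> a - snd (cb H)) F"
        then obtain H where H: "H \<in># F" "fst (cb H) \<bullet> a - snd (cb H) = 0" by auto
        then have "a \<in> H" using memH[OF H(1)] by simp
        then show False using av H by auto
      qed
      then show ?thesis by (simp add: prod_mset_zero_iff)
    qed
    then show "poly (PP i0 cb F a) (real a0) \<noteq> 0" unfolding K1 setc_a .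
  qed
  define y0 where "y0 = (\<lambda>i. if i \<in> J then \<alpha> i else undefined)"
  have y0P: "y0 \<in> PiE J (\<lambda>_. {0..m})" using al unfolding y0_def by (auto simp: PiE_iff extensional_def)
  have ua: "upd a J y0 = a" using al unfolding upd_def y0_def by (simp add: vec_eq_iff)
  have "Phi J (\<lambda>_. m) G a = Wt J (\<lambda>_. m) y0 * G (upd a J y0)"
    unfolding Phi_def
  proof (rule sum.remove[OF _ y0P, THEN trans], simp add: finite_PiE)
    have "(\<Sum>y\<in>PiE J (\<lambda>_. {0..m}) - {y0}. Wt J (\<lambda>_. m) y * G (upd a J y)) = 0"
    proof (rule sum.neutral, rule ballI)
      fix y assume y: "y \<in> PiE J (\<lambda>_. {0..m}) - {y0}"
      have "upd a J y \<noteq> a"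
      proof
        assume eq: "upd a J y = a"
        have "y = y0"
        proof
          fix i show "y i = y0 i"
          proof (cases "i \<in> J")
            case True
            then have "real (y i) = a$i" using arg_cong[OF eq, of "\<lambda>v. v$i"] by (simp add: upd_def)
            then show ?thesis using al True unfolding y0_def by simp
          next
            case False then show ?thesis using y unfolding y0_def by (auto simp: PiE_iff extensional_def)
          qed
        qed
        then show False using y by simp
      qed
      then show "Wt J (\<lambda>_. m) y * G (upd a J y) = 0" using K3 y by simp
    qed
    then show "Wt J (\<lambda>_. m) y0 * G (upd a J y0) + (\<Sum>y\<in>PiE J (\<lambda>_. {0..m}) - {y0}. Wt J (\<lambda>_. m) y * G (upd a J y))
        = Wt J (\<lambda>_. m) y0 * G (upd a J y0)" by simp
  qed
  also have "\<dots> \<noteq> 0" unfolding ua using K4 wt_nz by (simp add: Wt_def prod_zero_iff)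
  finally show False using van by simp
qed



lemma cover_mult_add: "cover_mult (A + B) x = cover_mult A x + cover_mult B x"
  by (simp add: cover_mult_def)

lemma cover_mult_sum: "finite I \<Longrightarrow> cover_mult (\<Sum>i\<in>I. f i) x = (\<Sum>i\<in>I. cover_mult (f i) x)"
  by (induction I rule: finite_induct) (auto simp: cover_mult_add, simp add: cover_mult_def)

lemma cover_mult_image: "finite S \<Longrightarrow> cover_mult (image_mset g (mset_set S)) x = card {s\<in>S. x \<in> g s}"
  by (simp add: cover_mult_def filter_mset_image_mset)

lemma size_sum_mset: "finite I \<Longrightarrow> size (\<Sum>i\<in>I. f i :: 'b multiset) = (\<Sum>i\<in>I. size (f i))"
  by (induction I rule: finite_induct) auto

lemma upper_bound:
  fixes a :: "real^'n"
  assumes ag: "a \<in> grid m"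
  shows "\<exists>F. k_cover_avoiding m 2 a F \<and> size F = m * CARD('n) + m"
proof -
  have "\<forall>i. \<exists>t. a$i = real t \<and> t \<le> m"
  proof
    fix i
    have "a$i \<in> real ` {0..m}" using ag unfolding grid_def by simp
    then obtain t where "t \<in> {0..m}" "a$i = real t" by blast
    then show "\<exists>t. a$i = real t \<and> t \<le> m" by auto
  qed
  then obtain \<alpha> where al: "\<forall>i. a$i = real (\<alpha> i) \<and> \<alpha> i \<le> m" by (rule choice[elim_format]) blast
  define F1 where "F1 = (\<Sum>i\<in>UNIV. image_mset (\<lambda>t. {x::real^'n. x$i = real t}) (mset_set ({0..m} - {\<alpha> i})))"
  define d where "d i j = (if j \<le> \<alpha> i then - real j else real j - real (\<alpha> i))" for i j
  define cv where "cv j = (\<chi> i. 1 / d i j)" for j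
  define Hj where "Hj j = {x. cv j \<bullet> x = cv j \<bullet> a + 1}" for j
  define F2 where "F2 = image_mset Hj (mset_set {1..m})"
  have dnz: "d i j \<noteq> 0" if "j \<ge> 1" for i j using that unfolding d_def by auto
  have szF1: "size F1 = m * CARD('n)"
  proof -
    have "size F1 = (\<Sum>i\<in>UNIV. card ({0..m} - {\<alpha> i}))" unfolding F1_def by (simp add: size_sum_mset)
    also have "\<dots> = (\<Sum>i\<in>(UNIV::'n set). m)" using al by (intro sum.cong) (auto simp: card_Diff_singleton)
    finally show ?thesis by simp
  qed
  have szF2: "size F2 = m" unfolding F2_def by simp
  have hyp1: "\<forall>H\<in>#F1. affine_hyperplane H \<and> a \<notin> H"
  proof
    fix H assume "H \<in># F1"
    then have "H \<in> (\<Union>i\<in>UNIV. set_mset (image_mset (\<lambda>t. {x::real^'n. x$i = real t}) (mset_set ({0..m} - {\<alpha> i}))))"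
    proof -
      have "set_mset F1 = (\<Union>i\<in>UNIV. set_mset (image_mset (\<lambda>t. {x::real^'n. x$i = real t}) (mset_set ({0..m} - {\<alpha> i}))))"
        unfolding F1_def by (rule set_mset_sum) simp
      then show ?thesis using \<open>H \<in># F1\<close> by blast
    qed
    then obtain i where "H \<in># image_mset (\<lambda>t. {x::real^'n. x$i = real t}) (mset_set ({0..m} - {\<alpha> i}))"
      by blast
    then have "H \<in> (\<lambda>t. {x::real^'n. x$i = real t}) ` ({0..m} - {\<alpha> i})" by simp
    then obtain t where it: "t \<in> {0..m} - {\<alpha> i}" "H = {x. x$i = real t}" by blast
    have "H = {x. axis i 1 \<bullet> x = real t}" unfolding it(2) by (simp add: inner_axis')
    then have "affine_hyperplane H" unfolding affine_hyperplane_def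
      by (intro exI[of _ "axis i 1"] exI[of _ "real t"]) simp
    moreover have "a \<notin> H" using it al by auto
    ultimately show "affine_hyperplane H \<and> a \<notin> H" by simp
  qed
  have hyp2: "\<forall>H\<in>#F2. affine_hyperplane H \<and> a \<notin> H"
  proof
    fix H assume "H \<in># F2"
    then obtain j where j: "j \<in> {1..m}" "H = Hj j" unfolding F2_def by auto
    obtain i0 :: 'n where True by simp
    have "cv j $ i0 \<noteq> 0" unfolding cv_def using dnz[of j i0] j by simp
    then have "cv j \<noteq> 0" by auto
    then have "affine_hyperplane H" unfolding affine_hyperplane_def j(2) Hj_def by blast
    moreover have "a \<notin> H" unfolding j(2) Hj_def by simp
    ultimately show "affine_hyperplane H \<and> a \<notin> H" by simp
  qed
  have cov: "cover_mult (F1 + F2) x \<ge> 2" if x: "x \<in> grid m - {a}" for x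
  proof -
    have "\<forall>i. \<exists>t. x$i = real t \<and> t \<le> m"
    proof
      fix i
      have "x$i \<in> real ` {0..m}" using x unfolding grid_def by simp
      then obtain t where "t \<in> {0..m}" "x$i = real t" by blast
      then show "\<exists>t. x$i = real t \<and> t \<le> m" by auto
    qed
    then obtain \<beta> where be: "\<forall>i. x$i = real (\<beta> i) \<and> \<beta> i \<le> m" by (rule choice[elim_format]) blast
    define D where "D = {i. \<beta> i \<noteq> \<alpha> i}"
    have c1: "cover_mult F1 x = card D"
    proof -
      have "cover_mult F1 x = (\<Sum>i\<in>UNIV. card {t\<in>{0..m} - {\<alpha> i}. x \<in> {x::real^'n. x$i = real t}})"
        unfolding F1_def by (simp add: cover_mult_sum cover_mult_image)
      also have "\<dots> = (\<Sum>i\<in>UNIV. if i \<in> D then 1 else 0)"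
      proof (rule sum.cong[OF refl])
        fix i
        have "{t\<in>{0..m} - {\<alpha> i}. x \<in> {x::real^'n. x$i = real t}} = (if i \<in> D then {\<beta> i} else {})"
          using be unfolding D_def by auto
        then show "card {t\<in>{0..m} - {\<alpha> i}. x \<in> {x::real^'n. x$i = real t}} = (if i \<in> D then 1 else 0)"
          by simp
      qed
      also have "\<dots> = card D" by (simp add: sum.If_cases)
      finally show ?thesis .
    qed
    have Dne: "D \<noteq> {}"
    proof
      assume "D = {}"
      then have "x = a" using al be unfolding D_def by (auto simp: vec_eq_iff)
      then show False using x by simp
    qed
    show ?thesis
    proof (cases "card D \<ge> 2")
      case True then show ?thesis using c1 by (simp add: cover_mult_add)
    next
      case False
      have "card D \<noteq> 0" using Dne by simp
      then have "card D = 1" using False by linarith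
      then obtain i where Di: "D = {i}" by (auto simp: card_Suc_eq)
      define j where "j = (if \<beta> i < \<alpha> i then \<alpha> i - \<beta> i else \<beta> i)"
      have ne: "\<beta> i \<noteq> \<alpha> i" using Di unfolding D_def by auto
      have "\<alpha> i \<le> m" "\<beta> i \<le> m" using be al by auto
      then have jr: "j \<in> {1..m}" using ne unfolding j_def by auto
      have dj: "d i j = real (\<beta> i) - real (\<alpha> i)" using ne unfolding d_def j_def by auto
      have oth: "x$k = a$k" if "k \<noteq> i" for k using that Di be al unfolding D_def by auto
      have "cv j \<bullet> x - cv j \<bullet> a = (\<Sum>k\<in>UNIV. cv j $ k * (x$k - a$k))"
        by (simp add: inner_vec_def sum_subtractf[symmetric] right_diff_distrib)
      also have "\<dots> = cv j $ i * (x$i - a$i)"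
        by (subst sum.remove[of UNIV i]) (auto simp: oth)
      also have "\<dots> = 1" unfolding cv_def using dj be al dnz[of j i] jr by simp
      finally have "x \<in> Hj j" unfolding Hj_def by simp
      then have "{s\<in>{1..m}. x \<in> Hj s} \<noteq> {}" using jr by blast
      then have "cover_mult F2 x \<ge> 1" unfolding F2_def by (simp add: cover_mult_image card_gt_0_iff Suc_le_eq)
      then show ?thesis using c1 \<open>card D = 1\<close> by (simp add: cover_mult_add)
    qed
  qed
  have "k_cover_avoiding m 2 a (F1 + F2)"
    unfolding k_cover_avoiding_def using hyp1 hyp2 cov by auto
  moreover have "size (F1 + F2) = m * CARD('n) + m" using szF1 szF2 by simp
  ultimately show ?thesis by blast
qed

theorem theorem2p2:
  fixes a :: "real^'n" and m :: nat
  assumes "m \<ge> 1" and "CARD('n) \<ge> 2" and "a \<in> grid m"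
  shows "f_cov m 2 a = m * CARD('n) + m"
  unfolding f_cov_def
proof (rule Least_equality)
  show "\<exists>F. k_cover_avoiding m 2 a F \<and> size F = m * CARD('n) + m" by (rule upper_bound[OF assms(3)])
next
  fix N assume "\<exists>F. k_cover_avoiding m 2 a F \<and> size F = N"
  then obtain F where "k_cover_avoiding m 2 a F" "size F = N" by blast
  then show "m * CARD('n) + m \<le> N" using lower_bound[OF assms] by blast
qed


end
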